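(* In the unit-speed single-speed model with station intensity $\lambda$, let $\mathcal A_V$ be the point process on $\mathbb R$ of the time coordinates $T_i$ of those heads $(T_i,H_i)$ of the head point process that lie on the lower envelope $\mathcal L_e$. Then the intensity of $\mathcal A_V$ is $\sqrt\lambda$.
   Context: Model: homogeneous Poisson point process of intensity $\lambda$ of initial station positions $X_i\in\mathbb R^2$, each moving at unit speed in an independent uniform direction. The distance of station $i$ to the origin at time $t$ is $((t-T_i)^2+H_i^2)^{1/2}$, where $(T_i,H_i)$ ("head") is the time and value of its minimal distance; the heads form a Poisson process on $\mathbb R\times\mathbb R^+$ of intensity $dt\otimes2\lambda dh$. The lower envelope is $\mathcal L_e=\{(t,L(t)):t\in\mathbb R\}$ with $L(t)$ the distance of the nearest station at time $t$. *)

theory Defs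
  imports "HOL-Probability.Probability"
begin

definition pcount :: "'b set \<Rightarrow> 'b set \<Rightarrow> ennreal" where
  "pcount S A = (if finite (S \<inter> A) then of_nat (card (S \<inter> A)) else \<infinity>)"

definition poisson_pp :: "'w measure \<Rightarrow> ('w \<Rightarrow> 'b set) \<Rightarrow> 'b measure \<Rightarrow> bool" where
  "poisson_pp M Phi mu \<longleftrightarrow>
     prob_space M \<and>
     (\<forall>\<omega>\<in>space M. Phi \<omega> \<subseteq> space mu) \<and>
     (\<forall>A\<in>sets mu. (\<lambda>\<omega>. pcount (Phi \<omega>) A) \<in> borel_measurable M) \<and>
     (\<forall>A\<in>sets mu. emeasure mu A < \<infinity> \<longrightarrow>
        (\<forall>k::nat. measure M {\<omega>\<in>space M. pcount (Phi \<omega>) A = of_nat k}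
             = exp (- measure mu A) * measure mu A ^ k / fact k)) \<and>
     (\<forall>A\<in>sets mu. emeasure mu A = \<infinity> \<longrightarrow>
        measure M {\<omega>\<in>space M. pcount (Phi \<omega>) A = \<infinity>} = 1) \<and>
     (\<forall>(n::nat) (A::nat \<Rightarrow> 'b set). (\<forall>i<n. A i \<in> sets mu) \<and> disjoint_family_on A {..<n} \<longrightarrow>
        prob_space.indep_vars M (\<lambda>_. borel) (\<lambda>i \<omega>. pcount (Phi \<omega>) (A i)) {..<n})"

definition head_intensity :: "real \<Rightarrow> (real \<times> real) measure" where
  "head_intensity lam = density lborel (\<lambda>p. if 0 < snd p then ennreal (2 * lam) else 0)"

text \<open>Lower envelope: L(t) = distance of nearest station at time t, where a station
  with head (T,H) is at distance sqrt((t-T)^2+H^2).\<close>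
definition envelope :: "(real \<times> real) set \<Rightarrow> real \<Rightarrow> real" where
  "envelope P t = (INF p\<in>P. sqrt ((t - fst p)\<^sup>2 + (snd p)\<^sup>2))"

definition AV :: "(real \<times> real) set \<Rightarrow> real set" where
  "AV P = {fst p | p. p \<in> P \<and> snd p = envelope P (fst p)}"

end

theory Submission
  imports Defs
begin


definition hdisk :: "real \<Rightarrow> real \<Rightarrow> (real \<times> real) set" where
  "hdisk c r = {y. 0 < snd y \<and> (fst y - c)\<^sup>2 + (snd y)\<^sup>2 < r\<^sup>2 \<and> 0 < r}"

lemma hd_borel[measurable]: "hdisk c r \<in> sets borel"
proof (cases "0 < r")
  case True
  have "open (hdisk c r)" unfolding hdisk_def using True
    by (auto intro!: open_Collect_conj open_Collect_less continuous_intros)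
  thus ?thesis by auto
qed (simp add: hdisk_def)

lemma slice_hdisk: "Pair t -` hdisk c r = (if (t-c)\<^sup>2 < r\<^sup>2 \<and> 0 < r then {0<..<sqrt (r\<^sup>2 - (t-c)\<^sup>2)} else {})"
proof -
  { fix s assume "0 < r" "(t-c)\<^sup>2 < r\<^sup>2"
    have "(0 < s \<and> (t - c)\<^sup>2 + s\<^sup>2 < r\<^sup>2) \<longleftrightarrow> (0 < s \<and> s < sqrt (r\<^sup>2 - (t-c)\<^sup>2))"
    proof -
      have "0 < s \<Longrightarrow> s\<^sup>2 < r\<^sup>2 - (t-c)\<^sup>2 \<longleftrightarrow> s < sqrt (r\<^sup>2 - (t-c)\<^sup>2)"
        by (metis abs_of_pos less_le real_less_rsqrt real_sqrt_abs real_sqrt_less_iff)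
      thus ?thesis by auto
    qed }
  moreover have "(t-c)\<^sup>2 \<ge> r\<^sup>2 \<Longrightarrow> \<not> (0 < s \<and> (t - c)\<^sup>2 + s\<^sup>2 < r\<^sup>2)" for s
    by (smt (verit) zero_le_power2)
  ultimately show ?thesis by (auto simp: hdisk_def)
qed

lemma slice_ball: "Pair t -` ball (c,0) r = (if (t-c)\<^sup>2 < r\<^sup>2 \<and> 0 < r then {-sqrt (r\<^sup>2 - (t-c)\<^sup>2)<..<sqrt (r\<^sup>2 - (t-c)\<^sup>2)} else {})"
proof -
  have d: "dist (c,0) (t,s) < r \<longleftrightarrow> (t-c)\<^sup>2 + s\<^sup>2 < r\<^sup>2 \<and> 0 < r" for s
  proof -
    have "dist (c,0) (t,s) = sqrt ((t-c)\<^sup>2 + s\<^sup>2)"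
      by (simp add: dist_Pair_Pair dist_real_def power2_commute)
    moreover have "sqrt ((t-c)\<^sup>2 + s\<^sup>2) < r \<longleftrightarrow> (t-c)\<^sup>2 + s\<^sup>2 < r\<^sup>2 \<and> 0 < r"
    proof (cases "0 < r")
      case True
      hence "r = sqrt (r\<^sup>2)" by simp
      hence "sqrt ((t-c)\<^sup>2 + s\<^sup>2) < r \<longleftrightarrow> sqrt ((t-c)\<^sup>2 + s\<^sup>2) < sqrt (r\<^sup>2)" by simp
      also have "\<dots> \<longleftrightarrow> (t-c)\<^sup>2 + s\<^sup>2 < r\<^sup>2" by (rule real_sqrt_less_iff)
      finally show ?thesis using True by simp
    next
      case False
      have "0 \<le> sqrt ((t-c)\<^sup>2 + s\<^sup>2)" by simp
      hence "\<not> sqrt ((t-c)\<^sup>2 + s\<^sup>2) < r" using False by linarith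
      thus ?thesis using False by simp
    qed
    ultimately show ?thesis by simp
  qed
  { fix s assume "0 < r" "(t-c)\<^sup>2 < r\<^sup>2"
    have "((t - c)\<^sup>2 + s\<^sup>2 < r\<^sup>2) \<longleftrightarrow> (\<bar>s\<bar> < sqrt (r\<^sup>2 - (t-c)\<^sup>2))"
      by (metis abs_ge_zero add.commute less_diff_eq power2_abs real_less_rsqrt real_sqrt_abs real_sqrt_less_iff)
    hence "((t - c)\<^sup>2 + s\<^sup>2 < r\<^sup>2) \<longleftrightarrow> (- sqrt (r\<^sup>2 - (t-c)\<^sup>2) < s \<and> s < sqrt (r\<^sup>2 - (t-c)\<^sup>2))"
      by auto }
  moreover have "(t-c)\<^sup>2 \<ge> r\<^sup>2 \<Longrightarrow> \<not> ((t - c)\<^sup>2 + s\<^sup>2 < r\<^sup>2)" for s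
    by (smt (verit) zero_le_power2)
  ultimately show ?thesis using d by (auto simp: mem_ball)
qed

lemma emeasure_hdisk: assumes "0 < r" shows "emeasure lborel (hdisk c r) = ennreal (pi * r\<^sup>2 / 2)"
proof -
  let ?w = "\<lambda>t. if (t-c)\<^sup>2 < r\<^sup>2 \<and> 0 < r then sqrt (r\<^sup>2 - (t-c)\<^sup>2) else 0"
  have e1: "emeasure lborel (hdisk c r) = (\<integral>\<^sup>+t. ennreal (?w t) \<partial>lborel)"
    apply (subst lborel_prod[symmetric])
    apply (subst lborel.emeasure_pair_measure_alt)
     subgoal apply (subst sets_pair_measure_cong[OF sets_lborel sets_lborel])
      unfolding borel_prod by simp
    apply (rule nn_integral_cong)
    apply (simp add: slice_hdisk)
    done
  have e2: "emeasure lborel (ball (c,0::real) r) = (\<integral>\<^sup>+t. ennreal (2 * ?w t) \<partial>lborel)"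
    apply (subst lborel_prod[symmetric])
    apply (subst lborel.emeasure_pair_measure_alt)
     subgoal apply (subst sets_pair_measure_cong[OF sets_lborel sets_lborel])
      unfolding borel_prod by simp
    apply (rule nn_integral_cong)
    apply (simp add: slice_ball)
    done
  also have "\<dots> = 2 * (\<integral>\<^sup>+t. ennreal (?w t) \<partial>lborel)"
    by (subst nn_integral_cmult[symmetric]) (auto simp: ennreal_mult)
  finally have "2 * emeasure lborel (hdisk c r) = ennreal (pi * r\<^sup>2)"
    using emeasure_ball[of r "(c,0::real)"] e1 assms by (simp add: unit_ball_vol_2 power2_eq_square)
  moreover have "ennreal (pi * r\<^sup>2) = ennreal (pi * r\<^sup>2 / 2) * 2"
    by (subst ennreal_numeral[symmetric], subst ennreal_mult[symmetric]) auto
  ultimately have "emeasure lborel (hdisk c r) * 2 = ennreal (pi * r\<^sup>2 / 2) * 2"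
    by (simp add: mult.commute)
  thus ?thesis
    by (simp add: mult.commute[of _ 2] ennreal_mult_cancel_left)
qed



lemma fst_bm[measurable]: "(fst :: real \<times> real \<Rightarrow> real) \<in> borel_measurable borel"
  by (intro borel_measurable_continuous_onI continuous_intros)

lemma snd_bm[measurable]: "(snd :: real \<times> real \<Rightarrow> real) \<in> borel_measurable borel"
  by (intro borel_measurable_continuous_onI continuous_intros)

lemma sets_hi[simp, measurable_cong]: "sets (head_intensity lam) = sets borel"
  by (simp add: head_intensity_def)

lemma space_hi[simp]: "space (head_intensity lam) = UNIV"
  by (simp add: head_intensity_def)

lemma emeasure_hi: "X \<in> sets borel \<Longrightarrow> emeasure (head_intensity lam) X =
   (\<integral>\<^sup>+y. (if 0 < snd y then ennreal (2 * lam) else 0) * indicator X y \<partial>lborel)"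
  unfolding head_intensity_def by (subst emeasure_density) auto

lemma hi_le: assumes "X \<in> sets borel"
  shows "emeasure (head_intensity lam) X \<le> ennreal (2 * lam) * emeasure lborel X"
proof -
  have "emeasure (head_intensity lam) X \<le> (\<integral>\<^sup>+y. ennreal (2 * lam) * indicator X y \<partial>lborel)"
    unfolding emeasure_hi[OF assms] by (intro nn_integral_mono) (auto simp: indicator_def)
  also have "\<dots> = ennreal (2 * lam) * emeasure lborel X"
    using assms by (simp add: nn_integral_cmult_indicator)
  finally show ?thesis .
qed

lemma hi_eq: assumes "X \<in> sets borel" "X \<subseteq> {y. 0 < snd y}"
  shows "emeasure (head_intensity lam) X = ennreal (2 * lam) * emeasure lborel X"
proof -
  have "emeasure (head_intensity lam) X = (\<integral>\<^sup>+y. ennreal (2 * lam) * indicator X y \<partial>lborel)"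
    unfolding emeasure_hi[OF assms(1)] using assms(2) by (intro nn_integral_cong) (auto simp: indicator_def)
  also have "\<dots> = ennreal (2 * lam) * emeasure lborel X"
    using assms by (simp add: nn_integral_cmult_indicator)
  finally show ?thesis .
qed

lemma hi_hdisk: assumes "0 \<le> lam"
  shows "emeasure (head_intensity lam) (hdisk c r) = ennreal (pi * lam * (max 0 r)\<^sup>2)"
proof (cases "0 < r")
  case True
  have sub: "hdisk c r \<subseteq> {y. 0 < snd y}" by (auto simp: hdisk_def)
  have "emeasure (head_intensity lam) (hdisk c r) = ennreal (2 * lam) * ennreal (pi * r\<^sup>2 / 2)"
    using hi_eq[OF hd_borel sub] emeasure_hdisk[OF True] by simp
  also have "\<dots> = ennreal (pi * lam * (max 0 r)\<^sup>2)"
    using True assms by (simp add: ennreal_mult[symmetric] max_def)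
  finally show ?thesis .
next
  case False
  hence "hdisk c r = {}" by (auto simp: hdisk_def)
  thus ?thesis using False by (simp add: max_def)
qed

lemma hi_neg: "emeasure (head_intensity lam) {y. snd y \<le> 0} = 0"
proof -
  have m: "{y::real\<times>real. snd y \<le> 0} \<in> sets borel" by measurable
  show ?thesis
    unfolding emeasure_hi[OF m] by (rule nn_integral_zero') (auto simp: indicator_def)
qed

definition cell :: "real \<Rightarrow> int \<times> int \<Rightarrow> (real \<times> real) set" where
  "cell d Q = {real_of_int (fst Q) * d..<(real_of_int (fst Q) + 1) * d} \<times> {real_of_int (snd Q) * d..<(real_of_int (snd Q) + 1) * d}"

definition cidx :: "real \<Rightarrow> real \<times> real \<Rightarrow> int \<times> int" where
  "cidx d y = (\<lfloor>fst y / d\<rfloor>, \<lfloor>snd y / d\<rfloor>)"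

lemma cell_borel[measurable]: "cell d Q \<in> sets borel"
  unfolding cell_def by (intro borel_Times) auto

lemma floor_cell_iff: assumes "0 < d" shows "(real_of_int i * d \<le> x \<and> x < (real_of_int i + 1) * d) \<longleftrightarrow> \<lfloor>x / d\<rfloor> = i"
  using assms by (simp add: floor_eq_iff le_divide_eq divide_less_eq mult.commute)

lemma mem_cell: assumes "0 < d" shows "y \<in> cell d Q \<longleftrightarrow> Q = cidx d y"
  using floor_cell_iff[OF assms] unfolding cell_def cidx_def
  by (cases y; cases Q) auto

lemma emeasure_cell: assumes "0 < d" shows "emeasure lborel (cell d Q) = ennreal (d * d)"
proof -
  have "emeasure lborel (cell d Q) = emeasure (lborel \<Otimes>\<^sub>M lborel) (cell d Q)"
    by (simp add: lborel_prod)
  also have "\<dots> = ennreal d * ennreal d"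
    unfolding cell_def using assms
    by (subst lborel.emeasure_pair_measure_Times) (auto simp: algebra_simps)
  finally show ?thesis using assms by (simp add: ennreal_mult)
qed

lemma hi_cell: assumes "0 < d" "0 \<le> lam"
  shows "emeasure (head_intensity lam) (cell d Q) \<le> ennreal (2 * lam * d\<^sup>2)"
  using hi_le[OF cell_borel, of lam d Q] emeasure_cell[OF assms(1)] assms
  by (simp add: ennreal_mult[symmetric] power2_eq_square mult.assoc)

definition sbox :: "nat \<Rightarrow> (real \<times> real) set" where
  "sbox k = {- real k..real k} \<times> {- real k..real k}"

lemma sbox_borel[measurable]: "sbox k \<in> sets borel"
  unfolding sbox_def by (intro borel_Times) auto

lemma hi_sbox: assumes "0 \<le> lam" shows "emeasure (head_intensity lam) (sbox k) < \<infinity>"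
proof -
  have "emeasure lborel (sbox k) = emeasure (lborel \<Otimes>\<^sub>M lborel) (sbox k)"
    by (simp add: lborel_prod)
  also have "\<dots> = ennreal (2 * real k) * ennreal (2 * real k)"
    unfolding sbox_def by (subst lborel.emeasure_pair_measure_Times) auto
  finally have "emeasure lborel (sbox k) < \<infinity>" by (simp add: ennreal_mult[symmetric])
  hence "ennreal (2 * lam) * emeasure lborel (sbox k) < \<infinity>"
    by (simp add: ennreal_mult_less_top)
  thus ?thesis using hi_le[OF sbox_borel, of lam k] by (rule le_less_trans[rotated])
qed



lemma pcount_cases: "pcount S A = \<infinity> \<or> (\<exists>k. pcount S A = of_nat k)"
  by (auto simp: pcount_def)

lemma pcount_zero_iff: "pcount S A = 0 \<longleftrightarrow> S \<inter> A = {}"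
  by (auto simp: pcount_def)

lemma pcount_one_iff: "pcount S A = 1 \<longleftrightarrow> (\<exists>p. S \<inter> A = {p})"
proof -
  have "pcount S A = 1 \<longleftrightarrow> finite (S \<inter> A) \<and> card (S \<inter> A) = 1"
    unfolding pcount_def by auto
  also have "\<dots> \<longleftrightarrow> (\<exists>p. S \<inter> A = {p})" using card_1_singleton_iff by fastforce
  finally show ?thesis .
qed

locale hp =
  fixes M :: "'w measure" and H :: "'w \<Rightarrow> (real \<times> real) set" and lam :: real
  assumes lam_pos: "0 < lam" and pp: "poisson_pp M H (head_intensity lam)"
begin

sublocale prob_space M using pp by (simp add: poisson_pp_def)

abbreviation "mu \<equiv> head_intensity lam"

lemma cnt_bm[measurable]: "X \<in> sets borel \<Longrightarrow> (\<lambda>\<omega>. pcount (H \<omega>) X) \<in> borel_measurable M"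
  using pp by (simp add: poisson_pp_def)

lemma prob_cnt: "X \<in> sets borel \<Longrightarrow> emeasure mu X < \<infinity> \<Longrightarrow>
   prob {\<omega>\<in>space M. pcount (H \<omega>) X = of_nat k} = exp (- measure mu X) * measure mu X ^ k / fact k"
  using pp by (simp add: poisson_pp_def)

lemma prob_10:
  assumes X[measurable]: "X \<in> sets borel" and Y[measurable]: "Y \<in> sets borel" and XY: "X \<inter> Y = {}"
    and fX: "emeasure mu X < \<infinity>" and fY: "emeasure mu Y < \<infinity>"
  shows "prob {\<omega>\<in>space M. pcount (H \<omega>) X = 1 \<and> pcount (H \<omega>) Y = 0}
         = (measure mu X * exp (- measure mu X)) * exp (- measure mu Y)"
proof -
  define A where "A = (\<lambda>i::nat. if i = 0 then X else Y)"
  have Aset: "\<forall>i<2. A i \<in> sets mu" by (auto simp: A_def)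
  have dj: "disjoint_family_on A {..<2}"
    using XY unfolding disjoint_family_on_def A_def by auto
  have ind: "indep_vars (\<lambda>_. borel) (\<lambda>i \<omega>. pcount (H \<omega>) (A i)) {..<2}"
    using pp Aset dj unfolding poisson_pp_def by blast
  define S where "S = (\<lambda>i::nat. if i = 0 then {1::ennreal} else {0})"
  have "prob (\<Inter>i\<in>{..<2}. (\<lambda>\<omega>. pcount (H \<omega>) (A i)) -` S i \<inter> space M)
      = (\<Prod>i\<in>{..<2}. prob ((\<lambda>\<omega>. pcount (H \<omega>) (A i)) -` S i \<inter> space M))"
  proof (rule indep_varsD[OF ind])
    have "0 \<in> {..<2::nat}" by simp
    thus "{..<2::nat} \<noteq> {}" by blast
  qed (auto simp: S_def)
  moreover have "{..<2::nat} = {0, 1}" by auto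
  ultimately have eq: "prob ((\<lambda>\<omega>. pcount (H \<omega>) X) -` {1} \<inter> space M \<inter> ((\<lambda>\<omega>. pcount (H \<omega>) Y) -` {0} \<inter> space M))
      = prob ((\<lambda>\<omega>. pcount (H \<omega>) X) -` {1} \<inter> space M) * prob ((\<lambda>\<omega>. pcount (H \<omega>) Y) -` {0} \<inter> space M)"
    by (simp add: A_def S_def)
  have e1: "(\<lambda>\<omega>. pcount (H \<omega>) X) -` {1} \<inter> space M = {\<omega>\<in>space M. pcount (H \<omega>) X = of_nat 1}" by auto
  have e0: "(\<lambda>\<omega>. pcount (H \<omega>) Y) -` {0} \<inter> space M = {\<omega>\<in>space M. pcount (H \<omega>) Y = of_nat 0}" by auto
  have "{\<omega>\<in>space M. pcount (H \<omega>) X = 1 \<and> pcount (H \<omega>) Y = 0} =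
     (\<lambda>\<omega>. pcount (H \<omega>) X) -` {1} \<inter> space M \<inter> ((\<lambda>\<omega>. pcount (H \<omega>) Y) -` {0} \<inter> space M)" by auto
  with eq have "prob {\<omega>\<in>space M. pcount (H \<omega>) X = 1 \<and> pcount (H \<omega>) Y = 0} =
     prob {\<omega>\<in>space M. pcount (H \<omega>) X = of_nat 1} * prob {\<omega>\<in>space M. pcount (H \<omega>) Y = of_nat 0}"
    by (simp only: e1 e0)
  also have "\<dots> = (measure mu X * exp (- measure mu X)) * exp (- measure mu Y)"
    using prob_cnt[OF X fX, of 1] prob_cnt[OF Y fY, of 0] by simp
  finally show ?thesis .
qed

lemma AE_neg: "AE \<omega> in M. pcount (H \<omega>) {y. snd y \<le> 0} = 0"
proof -
  have m: "{y::real\<times>real. snd y \<le> 0} \<in> sets borel" by measurable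
  have z: "measure mu {y. snd y \<le> 0} = 0" using hi_neg by (simp add: measure_def)
  have "prob {\<omega>\<in>space M. pcount (H \<omega>) {y. snd y \<le> 0} = of_nat 0} = 1"
    using prob_cnt[OF m, of 0] hi_neg z by simp
  from AE_prob_1[OF this] show ?thesis by auto
qed

lemma AE_fin: assumes X[measurable]: "X \<in> sets borel" and fX: "emeasure mu X < \<infinity>"
  shows "AE \<omega> in M. pcount (H \<omega>) X \<noteq> \<infinity>"
proof -
  define m where "m = measure mu X"
  define Ak where "Ak = (\<lambda>k::nat. {\<omega>\<in>space M. pcount (H \<omega>) X = of_nat k})"
  have Ak_sets: "range Ak \<subseteq> sets M" unfolding Ak_def by auto
  have dj: "disjoint_family Ak" unfolding Ak_def disjoint_family_on_def by auto
  have s1: "(\<lambda>k. prob (Ak k)) sums prob (\<Union>k. Ak k)"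
    by (rule measure_UNION[OF Ak_sets dj]) (simp add: emeasure_eq_measure)
  have "(\<lambda>k. exp (- m) * (m ^ k /\<^sub>R fact k)) sums (exp (- m) * exp m)"
    by (intro sums_mult exp_converges)
  moreover have pk: "\<And>k. prob (Ak k) = exp (- m) * (m ^ k /\<^sub>R fact k)"
    unfolding Ak_def m_def using prob_cnt[OF X fX] by (simp add: field_simps)
  moreover have "exp (- m) * exp m = 1" by (simp add: exp_minus_inverse mult.commute)
  ultimately have s2: "(\<lambda>k. prob (Ak k)) sums 1" by simp
  have "prob (\<Union>k. Ak k) = 1" using sums_unique2[OF s1 s2] .
  from AE_prob_1[OF this] show ?thesis
    by (rule AE_mp) (auto simp: Ak_def)
qed

end



definition Dp :: "real \<times> real \<Rightarrow> (real \<times> real) set" where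
  "Dp p = {q. 0 < snd q \<and> (fst q - fst p)\<^sup>2 + (snd q)\<^sup>2 < (snd p)\<^sup>2}"

definition Env :: "(real \<times> real) set \<Rightarrow> real set \<Rightarrow> (real \<times> real) set" where
  "Env P B = {p\<in>P. fst p \<in> B \<and> P \<inter> Dp p = {}}"

definition AB :: "real set \<Rightarrow> (real \<times> real) set" where
  "AB B = {y. fst y \<in> B \<and> 0 < snd y}"

abbreviation ecard :: "'a set \<Rightarrow> ennreal" where
  "ecard S \<equiv> emeasure (count_space UNIV) S"

lemma ecard_def': "ecard S = (if finite S then of_nat (card S) else \<infinity>)"
  by (simp add: emeasure_count_space)

lemma pcount_ecard: "pcount S A = ecard (S \<inter> A)"
  by (simp add: pcount_def ecard_def')

lemma ecard_image_le: "ecard (f ` S) \<le> ecard S"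
proof (cases "finite S")
  case True
  thus ?thesis by (simp add: ecard_def' card_image_le)
next
  case False
  thus ?thesis by (simp add: ecard_def')
qed

lemma ecard_inj: "inj_on f S \<Longrightarrow> ecard (f ` S) = ecard S"
  by (auto simp: ecard_def' card_image dest: finite_imageD)

lemma ecard_mono: "S \<subseteq> T \<Longrightarrow> ecard S \<le> ecard T"
  by (rule emeasure_mono) auto

lemma p_notin_Dp: "p \<notin> Dp p"
  by (auto simp: Dp_def)

lemma env_char:
  assumes pos: "\<forall>q\<in>P. 0 < snd q" and p: "p \<in> P"
  shows "snd p = envelope P (fst p) \<longleftrightarrow> P \<inter> Dp p = {}"
proof -
  let ?f = "\<lambda>q. sqrt ((fst p - fst q)\<^sup>2 + (snd q)\<^sup>2)"
  have bdd: "bdd_below (?f ` P)" by (rule bdd_belowI[of _ 0]) auto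
  have hp: "0 < snd p" using pos p by auto
  have fp: "?f p = snd p" using hp by simp
  have le: "envelope P (fst p) \<le> snd p"
    unfolding envelope_def using cINF_lower[OF bdd p] fp by simp
  have key: "?f q < snd p \<longleftrightarrow> q \<in> Dp p" if "q \<in> P" for q
  proof -
    have "?f q < snd p \<longleftrightarrow> ?f q < sqrt ((snd p)\<^sup>2)" using hp by simp
    also have "\<dots> \<longleftrightarrow> (fst p - fst q)\<^sup>2 + (snd q)\<^sup>2 < (snd p)\<^sup>2" by (rule real_sqrt_less_iff)
    also have "\<dots> \<longleftrightarrow> q \<in> Dp p" using pos that by (auto simp: Dp_def power2_commute)
    finally show ?thesis .
  qed
  show ?thesis
  proof
    assume eq: "snd p = envelope P (fst p)"
    show "P \<inter> Dp p = {}"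
    proof (rule ccontr)
      assume "P \<inter> Dp p \<noteq> {}"
      then obtain q where q: "q \<in> P" "q \<in> Dp p" by auto
      hence "?f q < snd p" using key by auto
      moreover have "envelope P (fst p) \<le> ?f q"
        unfolding envelope_def using cINF_lower[OF bdd q(1)] .
      ultimately show False using eq by simp
    qed
  next
    assume e: "P \<inter> Dp p = {}"
    have "snd p \<le> envelope P (fst p)"
      unfolding envelope_def
    proof (rule cINF_greatest)
      show "P \<noteq> {}" using p by auto
      fix q assume "q \<in> P"
      thus "snd p \<le> ?f q" using key[of q] e by auto
    qed
    thus "snd p = envelope P (fst p)" using le by simp
  qed
qed

lemma Env_aux: assumes p: "p \<in> Env P B" and q: "q \<in> Env P B" and f: "fst p = fst q"
  and lt: "0 < snd p" "snd p < snd q" shows False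
proof -
  have "p \<in> Dp q" using lt f by (auto simp: Dp_def intro!: power_strict_mono)
  thus False using p q by (auto simp: Env_def)
qed

lemma inj_fst_Env: assumes pos: "\<forall>q\<in>P. 0 < snd q" shows "inj_on fst (Env P B)"
proof (rule inj_onI)
  fix p q assume p: "p \<in> Env P B" and q: "q \<in> Env P B" and f: "fst p = fst q"
  have "0 < snd p" "0 < snd q" using p q pos by (auto simp: Env_def)
  hence "snd p = snd q" using Env_aux[OF p q f] Env_aux[OF q p f[symmetric]]
    by (metis linorder_neqE_linordered_idom)
  thus "p = q" using f by (simp add: prod_eq_iff)
qed

lemma AV_Env: assumes pos: "\<forall>q\<in>P. 0 < snd q"
  shows "AV P \<inter> B = fst ` Env P B"
proof (intro set_eqI iffI)
  fix x assume "x \<in> AV P \<inter> B"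
  then obtain p where p: "x = fst p" "p \<in> P" "snd p = envelope P (fst p)" "x \<in> B"
    unfolding AV_def by auto
  hence "p \<in> Env P B" using env_char[OF pos p(2)] by (auto simp: Env_def)
  thus "x \<in> fst ` Env P B" using p by auto
next
  fix x assume "x \<in> fst ` Env P B"
  then obtain p where p: "x = fst p" "p \<in> Env P B" by auto
  hence "p \<in> P" "fst p \<in> B" "P \<inter> Dp p = {}" by (auto simp: Env_def)
  hence "snd p = envelope P (fst p)" using env_char[OF pos] by auto
  hence "\<exists>q. x = fst q \<and> q \<in> P \<and> snd q = envelope P (fst q)" using p \<open>p \<in> P\<close> by blast
  hence "x \<in> AV P" unfolding AV_def by (simp only: mem_Collect_eq)
  thus "x \<in> AV P \<inter> B" using p \<open>fst p \<in> B\<close> by simp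
qed

lemma pcount_AV: assumes pos: "\<forall>q\<in>P. 0 < snd q"
  shows "pcount (AV P) B = ecard (Env P B)"
  unfolding pcount_ecard AV_Env[OF pos] by (rule ecard_inj[OF inj_fst_Env[OF pos]])



definition ca :: "real \<Rightarrow> int \<times> int \<Rightarrow> real" where "ca d Q = real_of_int (fst Q) * d"
definition cb :: "real \<Rightarrow> int \<times> int \<Rightarrow> real" where "cb d Q = real_of_int (snd Q) * d"

lemma cell_alt: "cell d Q = {ca d Q..<ca d Q + d} \<times> {cb d Q..<cb d Q + d}"
  by (simp add: cell_def ca_def cb_def algebra_simps)

lemma in_cell: "p \<in> cell d Q \<Longrightarrow> ca d Q \<le> fst p \<and> fst p < ca d Q + d \<and> cb d Q \<le> snd p \<and> snd p < cb d Q + d"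
  by (cases p) (simp add: cell_alt)

lemma G_up:
  assumes d: "0 < d" and p: "p \<in> cell d Q"
  shows "hdisk (ca d Q) (cb d Q - d) \<subseteq> Dp p"
proof
  fix y assume y: "y \<in> hdisk (ca d Q) (cb d Q - d)"
  define a where "a = ca d Q"
  define r where "r = cb d Q - d"
  define u where "u = \<bar>fst y - a\<bar>"
  define s where "s = snd y"
  have c: "a \<le> fst p" "fst p < a + d" "r + d \<le> snd p" using in_cell[OF p] by (auto simp: a_def r_def)
  have yy: "0 < s" "u\<^sup>2 + s\<^sup>2 < r\<^sup>2" "0 < r" using y by (auto simp: hdisk_def a_def r_def u_def s_def)
  have "u\<^sup>2 < r\<^sup>2" using yy by (smt (verit) zero_le_power2)
  hence ur: "u < r" using yy(3) by (metis abs_of_nonneg less_le_not_le power_mono u_def abs_ge_zero not_le)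
  have "\<bar>fst y - fst p\<bar> \<le> u + d" using c unfolding u_def by linarith
  hence "(fst y - fst p)\<^sup>2 \<le> (u + d)\<^sup>2"
    by (metis abs_ge_zero power2_abs power_mono)
  moreover have "u * d \<le> r * d" using ur d by simp
  moreover have "(r + d)\<^sup>2 \<le> (snd p)\<^sup>2" using c yy d by (intro power_mono) auto
  ultimately have "(fst y - fst p)\<^sup>2 + s\<^sup>2 < (snd p)\<^sup>2"
    using yy(2) by (simp add: power2_eq_square algebra_simps; linarith)
  thus "y \<in> Dp p" using yy(1) by (simp add: Dp_def s_def)
qed

lemma G_low:
  assumes d: "0 < d" and p: "p \<in> cell d Q" and hp: "0 < snd p"
  shows "Dp p \<subseteq> hdisk (ca d Q) (cb d Q + 2 * d)"
proof
  fix y assume y: "y \<in> Dp p"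
  define a where "a = ca d Q"
  define b where "b = cb d Q"
  define u where "u = \<bar>fst y - fst p\<bar>"
  define s where "s = snd y"
  define h where "h = snd p"
  have c: "a \<le> fst p" "fst p < a + d" "b \<le> h" "h < b + d" using in_cell[OF p] by (auto simp: a_def b_def h_def)
  have yy: "0 < s" "u\<^sup>2 + s\<^sup>2 < h\<^sup>2" using y by (auto simp: Dp_def u_def s_def h_def power2_commute)
  have "u\<^sup>2 < h\<^sup>2" using yy by (smt (verit) zero_le_power2)
  hence uh: "u < h" using hp unfolding h_def by (metis abs_ge_zero abs_of_nonneg less_le_not_le power_mono u_def not_le)
  have "\<bar>fst y - a\<bar> \<le> u + d" using c unfolding u_def by linarith
  hence "(fst y - a)\<^sup>2 \<le> (u + d)\<^sup>2"
    by (metis abs_ge_zero power2_abs power_mono)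
  moreover have "u * d \<le> h * d" using uh d by simp
  moreover have "(h + d)\<^sup>2 < (b + 2 * d)\<^sup>2" using c hp d unfolding h_def by (intro power_strict_mono) auto
  ultimately have "(fst y - a)\<^sup>2 + s\<^sup>2 < (b + 2 * d)\<^sup>2"
    using yy(2) by (simp add: power2_eq_square algebra_simps; linarith)
  moreover have "0 < b + 2 * d" using c hp d unfolding h_def by linarith
  ultimately show "y \<in> hdisk (ca d Q) (cb d Q + 2 * d)" using yy(1)
    by (simp add: hdisk_def s_def a_def b_def)
qed

lemma cell_dist:
  assumes "p \<in> cell d Q" "q \<in> cell d Q" shows "dist p q < 2 * d"
proof -
  have a: "\<bar>fst p - fst q\<bar> < d" "\<bar>snd p - snd q\<bar> < d" using in_cell[OF assms(1)] in_cell[OF assms(2)] by auto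
  have "dist p q = sqrt ((dist (fst p) (fst q))\<^sup>2 + (dist (snd p) (snd q))\<^sup>2)"
    by (cases p, cases q) (simp add: dist_Pair_Pair)
  also have "\<dots> \<le> \<bar>dist (fst p) (fst q)\<bar> + \<bar>dist (snd p) (snd q)\<bar>" by (rule sqrt_sum_squares_le_sum_abs)
  also have "\<dots> < 2 * d" using a by (simp add: dist_real_def)
  finally show ?thesis .
qed

definition SU :: "(real \<times> real) set \<Rightarrow> real set \<Rightarrow> real \<Rightarrow> (int \<times> int) set" where
  "SU P B d = {Q. pcount P (cell d Q \<inter> AB B) = 1 \<and> pcount P (hdisk (ca d Q) (cb d Q - d)) = 0}"

definition SL :: "(real \<times> real) set \<Rightarrow> real set \<Rightarrow> real \<Rightarrow> (int \<times> int) set" where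
  "SL P B d = {Q. pcount P (cell d Q \<inter> AB B) = 1 \<and>
      pcount P ((hdisk (ca d Q) (cb d Q + 2 * d) \<union> cell d Q) - (cell d Q \<inter> AB B)) = 0}"

lemma lower_path:
  assumes pos: "\<forall>q\<in>P. 0 < snd q" and d: "0 < d"
  shows "ecard (SL P B d) \<le> ecard (Env P B)"
proof -
  have "SL P B d \<subseteq> cidx d ` Env P B"
  proof
    fix Q assume "Q \<in> SL P B d"
    then obtain p where p: "P \<inter> (cell d Q \<inter> AB B) = {p}"
      and z: "P \<inter> ((hdisk (ca d Q) (cb d Q + 2 * d) \<union> cell d Q) - (cell d Q \<inter> AB B)) = {}"
      unfolding SL_def pcount_one_iff pcount_zero_iff by auto
    have pP: "p \<in> P" "p \<in> cell d Q" "fst p \<in> B" "0 < snd p" using p by (auto simp: AB_def)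
    have "P \<inter> Dp p = {}"
    proof (rule ccontr)
      assume "P \<inter> Dp p \<noteq> {}"
      then obtain q where q: "q \<in> P" "q \<in> Dp p" by auto
      hence "q \<in> hdisk (ca d Q) (cb d Q + 2 * d)" using G_low[OF d pP(2) pP(4)] by auto
      hence "q \<in> cell d Q \<inter> AB B" using z q by auto
      hence "q = p" using p q by auto
      thus False using q p_notin_Dp by auto
    qed
    hence "p \<in> Env P B" using pP by (auto simp: Env_def)
    moreover have "Q = cidx d p" using pP(2) mem_cell[OF d] by auto
    ultimately show "Q \<in> cidx d ` Env P B" by auto
  qed
  hence "ecard (SL P B d) \<le> ecard (cidx d ` Env P B)" by (rule ecard_mono)
  also have "\<dots> \<le> ecard (Env P B)" by (rule ecard_image_le)
  finally show ?thesis .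
qed

lemma isolate:
  assumes fin: "\<forall>p\<in>P. finite (P \<inter> cball p 1)" and F: "finite F" "F \<subseteq> P"
  shows "\<exists>e>0. \<forall>p\<in>F. \<forall>q\<in>P. q \<noteq> p \<longrightarrow> e \<le> dist p q"
proof -
  define S where "S = (\<Union>p\<in>F. P \<inter> cball p 1)"
  have fS: "finite S" unfolding S_def
    by (rule finite_UN_I[OF F(1)]) (use fin F in auto)
  define Ds where "Ds = (\<lambda>(p,q). dist p q) ` {(p,q). p \<in> F \<and> q \<in> S \<and> p \<noteq> q}"
  have fD: "finite Ds" unfolding Ds_def
    by (rule finite_imageI, rule finite_subset[of _ "F \<times> S"]) (use F fS in auto)
  define e where "e = Min (insert 1 Ds)"
  have epos: "0 < e" unfolding e_def using fD by (auto simp: Ds_def)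
  show ?thesis
  proof (intro exI conjI ballI impI)
    show "0 < e" by fact
    fix p q assume p: "p \<in> F" and q: "q \<in> P" and ne: "q \<noteq> p"
    show "e \<le> dist p q"
    proof (cases "q \<in> cball p 1")
      case True
      hence "dist p q \<in> Ds" unfolding Ds_def S_def using p q ne by force
      thus ?thesis unfolding e_def using fD by auto
    next
      case False
      hence "1 < dist p q" by (auto simp: mem_cball)
      moreover have "e \<le> 1" unfolding e_def using fD by auto
      ultimately show ?thesis by simp
    qed
  qed
qed

lemma upper_path:
  assumes pos: "\<forall>q\<in>P. 0 < snd q" and fin: "\<forall>p\<in>P. finite (P \<inter> cball p 1)"
    and F: "finite F" "F \<subseteq> Env P B"
  shows "\<exists>e>0. \<forall>d. 0 < d \<and> d < e \<longrightarrow> of_nat (card F) \<le> ecard (SU P B d)"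
proof -
  have FP: "F \<subseteq> P" using F by (auto simp: Env_def)
  obtain e where e: "0 < e" "\<forall>p\<in>F. \<forall>q\<in>P. q \<noteq> p \<longrightarrow> e \<le> dist p q"
    using isolate[OF fin F(1) FP] by blast
  show ?thesis
  proof (intro exI[of _ "e/2"] conjI allI impI)
    show "0 < e/2" using e by simp
    fix d assume dd: "0 < d \<and> d < e/2"
    hence d: "0 < d" by simp
    have alone: "P \<inter> cell d (cidx d p) = {p}" if p: "p \<in> F" for p
    proof -
      have pc: "p \<in> cell d (cidx d p)" using mem_cell[OF d] by simp
      { fix q assume q: "q \<in> P" "q \<in> cell d (cidx d p)"
        have "dist p q < 2 * d" by (rule cell_dist[OF pc q(2)])
        hence "q = p" using e(2) p q dd by force }
      thus ?thesis using pc p FP by auto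
    qed
    have sub: "cidx d ` F \<subseteq> SU P B d"
    proof
      fix Q assume "Q \<in> cidx d ` F"
      then obtain p where p: "p \<in> F" "Q = cidx d p" by auto
      have pE: "p \<in> P" "fst p \<in> B" "P \<inter> Dp p = {}" using p F by (auto simp: Env_def)
      have pc: "p \<in> cell d Q" using mem_cell[OF d] p by simp
      have "P \<inter> (cell d Q \<inter> AB B) = {p}"
        using alone[OF p(1)] p pE pos by (auto simp: AB_def)
      moreover have "P \<inter> hdisk (ca d Q) (cb d Q - d) = {}" using G_up[OF d pc] pE by auto
      ultimately show "Q \<in> SU P B d" unfolding SU_def pcount_one_iff pcount_zero_iff by auto
    qed
    have inj: "inj_on (cidx d) F"
    proof (rule inj_onI)
      fix p q assume p: "p \<in> F" and q: "q \<in> F" and eq: "cidx d p = cidx d q"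
      have "q \<in> cell d (cidx d p)" using eq mem_cell[OF d] by simp
      thus "p = q" using alone[OF p] q FP by auto
    qed
    have "of_nat (card F) = ecard F" using F by (simp add: ecard_def')
    also have "\<dots> = ecard (cidx d ` F)" using ecard_inj[OF inj] by simp
    also have "\<dots> \<le> ecard (SU P B d)" by (rule ecard_mono[OF sub])
    finally show "of_nat (card F) \<le> ecard (SU P B d)" .
  qed
qed



lemma measurable_countsum:
  fixes f :: "'i::countable \<Rightarrow> 'a \<Rightarrow> ennreal"
  assumes f: "\<And>i. f i \<in> borel_measurable M"
  shows "(\<lambda>x. \<integral>\<^sup>+i. f i x \<partial>count_space UNIV) \<in> borel_measurable M"
proof -
  interpret C: sigma_finite_measure "count_space (UNIV::'i set)" by (rule sigma_finite_measure_count_space)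
  have "(\<lambda>(i,x). f i x) \<in> borel_measurable (count_space UNIV \<Otimes>\<^sub>M M)"
    by (rule measurable_pair_measure_countable1) (auto simp: f)
  hence "(\<lambda>(x,i). f i x) \<in> borel_measurable (M \<Otimes>\<^sub>M count_space UNIV)"
    by (subst measurable_pair_swap_iff) simp
  thus ?thesis by (rule C.borel_measurable_nn_integral[where f="\<lambda>x i. f i x", simplified])
qed

lemma gauss_half0:
  "(\<integral>\<^sup>+x. ennreal (indicator {0..} x * exp (- x\<^sup>2)) \<partial>lborel) = ennreal (sqrt pi / 2)"
proof -
  have hb: "has_bochner_integral lborel (\<lambda>x. indicator {0..} x * exp (- x\<^sup>2)) (sqrt pi / 2)"
    using gaussian_moment_0 by simp
  hence "integrable lborel (\<lambda>x::real. indicator {0..} x * exp (- x\<^sup>2))"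
    and "integral\<^sup>L lborel (\<lambda>x::real. indicator {0..} x * exp (- x\<^sup>2)) = sqrt pi / 2"
    by (auto simp: has_bochner_integral_iff)
  thus ?thesis by (subst nn_integral_eq_integral) auto
qed

lemma gauss_half:
  assumes lam: "0 < lam"
  shows "(\<integral>\<^sup>+h. indicator {0<..} h * ennreal (2 * lam * exp (- pi * lam * h\<^sup>2)) \<partial>lborel) = ennreal (sqrt lam)"
proof -
  define s where "s = sqrt (pi * lam)"
  have s: "0 < s" unfolding s_def using lam by simp
  have s2: "s\<^sup>2 = pi * lam" unfolding s_def using lam by simp
  have "ennreal (sqrt pi / 2) = (\<integral>\<^sup>+x. ennreal (indicator {0..} x * exp (- x\<^sup>2)) \<partial>lborel)"
    by (rule gauss_half0[symmetric])
  also have "\<dots> = ennreal \<bar>s\<bar> * (\<integral>\<^sup>+h. ennreal (indicator {0..} (0 + s * h) * exp (- (0 + s * h)\<^sup>2)) \<partial>lborel)"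
    by (rule nn_integral_real_affine) (use s in auto)
  also have "(\<lambda>h. ennreal (indicator {0..} (0 + s * h) * exp (- (0 + s * h)\<^sup>2))) =
             (\<lambda>h. ennreal (indicator {0..} h * exp (- pi * lam * h\<^sup>2)))"
    using s s2 by (auto simp: indicator_def power_mult_distrib zero_le_mult_iff)
  finally have e: "ennreal (sqrt pi / 2) = ennreal s * (\<integral>\<^sup>+h. ennreal (indicator {0..} h * exp (- pi * lam * h\<^sup>2)) \<partial>lborel)"
    using s by simp
  have "(\<integral>\<^sup>+h. ennreal (indicator {0..} h * exp (- pi * lam * h\<^sup>2)) \<partial>lborel)
      = ennreal (1 / s) * (ennreal s * (\<integral>\<^sup>+h. ennreal (indicator {0..} h * exp (- pi * lam * h\<^sup>2)) \<partial>lborel))"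
    using s by (simp add: mult.assoc[symmetric] ennreal_mult[symmetric])
  also have "\<dots> = ennreal (sqrt pi / 2 / s)" unfolding e[symmetric] using s
    by (simp add: ennreal_mult[symmetric])
  finally have I: "(\<integral>\<^sup>+h. ennreal (indicator {0..} h * exp (- pi * lam * h\<^sup>2)) \<partial>lborel) = ennreal (sqrt pi / 2 / s)" .
  have "(\<integral>\<^sup>+h. indicator {0<..} h * ennreal (2 * lam * exp (- pi * lam * h\<^sup>2)) \<partial>lborel)
      = (\<integral>\<^sup>+h. ennreal (2 * lam) * ennreal (indicator {0..} h * exp (- pi * lam * h\<^sup>2)) \<partial>lborel)"
    using lam by (intro nn_integral_cong_AE, use AE_lborel_singleton[of 0] in eventually_elim)
      (auto simp: indicator_def ennreal_mult)
  also have "\<dots> = ennreal (2 * lam) * ennreal (sqrt pi / 2 / s)"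
    by (subst nn_integral_cmult) (use I in auto)
  also have "\<dots> = ennreal (sqrt lam)"
  proof -
    have "2 * lam * (sqrt pi / 2 / s) = sqrt lam"
      unfolding s_def using lam
      by (simp add: real_sqrt_mult field_simps)
    thus ?thesis using lam s by (simp add: ennreal_mult[symmetric])
  qed
  finally show ?thesis .
qed



lemma AB_borel[measurable]: assumes [measurable]: "B \<in> sets borel" shows "AB B \<in> sets borel"
  unfolding AB_def by measurable

lemma cellsum:
  assumes d: "0 < d" and X[measurable]: "X \<in> sets borel"
  shows "(\<integral>\<^sup>+Q. emeasure (head_intensity lam) (cell d Q \<inter> X) * ennreal (c Q) \<partial>count_space UNIV)
       = (\<integral>\<^sup>+y. indicator X y * ennreal (c (cidx d y)) \<partial>head_intensity lam)"
proof -
  have "(\<integral>\<^sup>+Q. emeasure (head_intensity lam) (cell d Q \<inter> X) * ennreal (c Q) \<partial>count_space UNIV)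
      = (\<integral>\<^sup>+Q. \<integral>\<^sup>+y. ennreal (c Q) * indicator (cell d Q \<inter> X) y \<partial>head_intensity lam \<partial>count_space UNIV)"
    by (intro nn_integral_cong) (simp add: nn_integral_cmult_indicator mult.commute)
  also have "\<dots> = (\<integral>\<^sup>+y. \<integral>\<^sup>+Q. ennreal (c Q) * indicator (cell d Q \<inter> X) y \<partial>count_space UNIV \<partial>head_intensity lam)"
    by (rule nn_integral_count_space_nn_integral[symmetric]) auto
  also have "\<dots> = (\<integral>\<^sup>+y. \<integral>\<^sup>+Q. (indicator X y * ennreal (c (cidx d y))) * indicator {cidx d y} Q \<partial>count_space UNIV \<partial>head_intensity lam)"
    by (intro nn_integral_cong) (auto simp: indicator_def mem_cell[OF d])
  also have "\<dots> = (\<integral>\<^sup>+y. indicator X y * ennreal (c (cidx d y)) \<partial>head_intensity lam)"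
    by (intro nn_integral_cong) (simp add: nn_integral_cmult_indicator)
  finally show ?thesis .
qed

lemma Klem:
  assumes B[measurable]: "B \<in> sets borel" and g[measurable]: "g \<in> borel_measurable borel"
    and gnn: "\<And>h. 0 \<le> g h" and lam: "0 \<le> lam"
  shows "(\<integral>\<^sup>+y. indicator (AB B) y * ennreal (g (snd y)) \<partial>head_intensity lam)
       = emeasure lborel B * (\<integral>\<^sup>+h. indicator {0<..} h * ennreal (2 * lam * g h) \<partial>lborel)"
proof -
  define C where "C = (\<integral>\<^sup>+h. indicator {0<..} h * ennreal (2 * lam * g h) \<partial>lborel)"
  define F where "F = (\<lambda>y::real\<times>real. indicator B (fst y) * (indicator {0<..} (snd y) * ennreal (2 * lam * g (snd y))))"
  have Fm: "F \<in> borel_measurable (lborel \<Otimes>\<^sub>M lborel)" unfolding F_def by measurable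
  have "(\<integral>\<^sup>+y. indicator (AB B) y * ennreal (g (snd y)) \<partial>head_intensity lam)
     = (\<integral>\<^sup>+y. (if 0 < snd y then ennreal (2 * lam) else 0) * (indicator (AB B) y * ennreal (g (snd y))) \<partial>lborel)"
    unfolding head_intensity_def by (subst nn_integral_density) auto
  also have "\<dots> = (\<integral>\<^sup>+y. F y \<partial>lborel)"
    using lam gnn by (intro nn_integral_cong) (auto simp: F_def AB_def indicator_def ennreal_mult)
  also have "\<dots> = (\<integral>\<^sup>+y. F y \<partial>(lborel \<Otimes>\<^sub>M lborel))" by (simp add: lborel_prod)
  also have "\<dots> = (\<integral>\<^sup>+t. \<integral>\<^sup>+h. F (t, h) \<partial>lborel \<partial>lborel)"
    by (rule lborel.nn_integral_fst[symmetric, OF Fm])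
  also have "\<dots> = (\<integral>\<^sup>+t. indicator B t * C \<partial>lborel)"
    unfolding F_def C_def by (intro nn_integral_cong) (simp add: nn_integral_cmult)
  also have "\<dots> = C * emeasure lborel B"
    by (simp add: nn_integral_cmult_indicator mult.commute)
  finally show ?thesis by (simp add: C_def mult.commute)
qed

definition dn :: "nat \<Rightarrow> real" where "dn n = inverse (real (Suc n))"

lemma dn_pos: "0 < dn n" by (simp add: dn_def)
lemma dn_le1: "dn n \<le> 1" by (simp add: dn_def inverse_le_1_iff)
lemma dn_dec: "m \<le> n \<Longrightarrow> dn n \<le> dn m" by (simp add: dn_def le_imp_inverse_le)
lemma dn_lim: "dn \<longlonglongrightarrow> 0" unfolding dn_def by (rule LIMSEQ_inverse_real_of_nat)
lemma dn_small: "0 < e \<Longrightarrow> \<exists>N. \<forall>n\<ge>N. dn n < e"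
proof -
  assume e: "0 < e"
  then obtain N where "inverse (real (Suc N)) < e" using reals_Archimedean by blast
  thus ?thesis using dn_dec unfolding dn_def[symmetric] by (meson order.strict_trans1)
qed

definition fU :: "real \<Rightarrow> nat \<Rightarrow> real \<Rightarrow> ennreal" where
  "fU lam n h = indicator {0<..} h * ennreal (2 * lam * exp (- pi * lam * (max 0 (h - 2 * dn n))\<^sup>2))"
definition fL :: "real \<Rightarrow> nat \<Rightarrow> real \<Rightarrow> ennreal" where
  "fL lam n h = indicator {0<..} h * ennreal (2 * lam * exp (- (pi * lam * (h + 2 * dn n)\<^sup>2 + 2 * lam * (dn n)\<^sup>2)))"
definition f0 :: "real \<Rightarrow> real \<Rightarrow> ennreal" where
  "f0 lam h = indicator {0<..} h * ennreal (2 * lam * exp (- pi * lam * h\<^sup>2))"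

lemma fU_meas[measurable]: "fU lam n \<in> borel_measurable borel" unfolding fU_def by measurable
lemma fL_meas[measurable]: "fL lam n \<in> borel_measurable borel" unfolding fL_def by measurable

lemma fU_mono: assumes lam: "0 < lam" and mn: "m \<le> n" shows "fU lam n h \<le> fU lam m h"
proof -
  have "max 0 (h - 2 * dn m) \<le> max 0 (h - 2 * dn n)" using dn_dec[OF mn] by simp
  hence "(max 0 (h - 2 * dn m))\<^sup>2 \<le> (max 0 (h - 2 * dn n))\<^sup>2" by (intro power_mono) auto
  hence "exp (- pi * lam * (max 0 (h - 2 * dn n))\<^sup>2) \<le> exp (- pi * lam * (max 0 (h - 2 * dn m))\<^sup>2)"
    using lam by (simp add: mult_left_mono)
  thus ?thesis unfolding fU_def using lam
    by (auto simp: indicator_def intro!: ennreal_leI mult_left_mono)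
qed

lemma fL_mono: assumes lam: "0 < lam" and mn: "m \<le> n" shows "fL lam m h \<le> fL lam n h"
proof (cases "0 < h")
  case True
  have dd: "dn n \<le> dn m" "0 < dn n" using dn_dec[OF mn] dn_pos by auto
  have "(h + 2 * dn n)\<^sup>2 \<le> (h + 2 * dn m)\<^sup>2" using dd True by (intro power_mono) auto
  moreover have "(dn n)\<^sup>2 \<le> (dn m)\<^sup>2" using dd by (intro power_mono) auto
  ultimately have "pi * lam * (h + 2 * dn n)\<^sup>2 + 2 * lam * (dn n)\<^sup>2 \<le> pi * lam * (h + 2 * dn m)\<^sup>2 + 2 * lam * (dn m)\<^sup>2"
    using lam by (intro add_mono mult_left_mono) auto
  hence "exp (- (pi * lam * (h + 2 * dn m)\<^sup>2 + 2 * lam * (dn m)\<^sup>2)) \<le> exp (- (pi * lam * (h + 2 * dn n)\<^sup>2 + 2 * lam * (dn n)\<^sup>2))"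
    by simp
  thus ?thesis unfolding fL_def using lam
    by (auto simp: indicator_def intro!: ennreal_leI mult_left_mono)
qed (simp add: fL_def)

lemma fU_lim: assumes lam: "0 < lam" shows "(\<lambda>n. fU lam n h) \<longlonglongrightarrow> f0 lam h"
proof (cases "0 < h")
  case True
  have "(\<lambda>n. ennreal (2 * lam * exp (- pi * lam * (max 0 (h - 2 * dn n))\<^sup>2))) \<longlonglongrightarrow>
         ennreal (2 * lam * exp (- pi * lam * (max 0 (h - 2 * 0))\<^sup>2))"
    by (intro tendsto_intros dn_lim)
  thus ?thesis using True by (simp add: fU_def f0_def)
qed (simp add: fU_def f0_def)

lemma fL_lim: assumes lam: "0 < lam" shows "(\<lambda>n. fL lam n h) \<longlonglongrightarrow> f0 lam h"
proof (cases "0 < h")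
  case True
  have "(\<lambda>n. ennreal (2 * lam * exp (- (pi * lam * (h + 2 * dn n)\<^sup>2 + 2 * lam * (dn n)\<^sup>2)))) \<longlonglongrightarrow>
         ennreal (2 * lam * exp (- (pi * lam * (h + 2 * 0)\<^sup>2 + 2 * lam * 0\<^sup>2)))"
    by (intro tendsto_intros dn_lim)
  thus ?thesis using True by (simp add: fL_def f0_def)
qed (simp add: fL_def f0_def)

lemma int_f0: "0 < lam \<Longrightarrow> (\<integral>\<^sup>+h. f0 lam h \<partial>lborel) = ennreal (sqrt lam)"
  unfolding f0_def by (rule gauss_half)

lemma fU0_fin: assumes lam: "0 < lam" shows "(\<integral>\<^sup>+h. fU lam 0 h \<partial>lborel) < \<infinity>"
proof -
  define G where "G = (\<lambda>h::real. indicator {0<..} (h - 2) * ennreal (2 * lam * exp (- pi * lam * (h - 2)\<^sup>2)))"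
  have Gm[measurable]: "G \<in> borel_measurable borel" unfolding G_def by measurable
  have "(\<integral>\<^sup>+h. fU lam 0 h \<partial>lborel) \<le> (\<integral>\<^sup>+h. ennreal (2 * lam) * indicator {0..2} h + G h \<partial>lborel)"
  proof (intro nn_integral_mono)
    fix h :: real
    show "fU lam 0 h \<le> ennreal (2 * lam) * indicator {0..2} h + G h"
    proof (cases "h \<le> 2")
      case True
      have "exp (- pi * lam * (max 0 (h - 2 * dn 0))\<^sup>2) \<le> 1" using lam by simp
      hence "fU lam 0 h \<le> ennreal (2 * lam) * indicator {0..2} h"
        unfolding fU_def using True lam by (auto simp: indicator_def intro!: ennreal_leI)
      thus ?thesis by (simp add: add_increasing2)
    next
      case False
      hence "fU lam 0 h = G h" by (simp add: fU_def G_def dn_def indicator_def)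
      thus ?thesis by simp
    qed
  qed
  also have "\<dots> = ennreal (2 * lam) * 2 + (\<integral>\<^sup>+h. G h \<partial>lborel)"
    by (subst nn_integral_add) (auto simp: nn_integral_cmult_indicator)
  also have "(\<integral>\<^sup>+h. G h \<partial>lborel) = ennreal \<bar>1\<bar> * (\<integral>\<^sup>+x. G (2 + 1 * x) \<partial>lborel)"
    by (rule nn_integral_real_affine) auto
  also have "\<dots> = ennreal (sqrt lam)"
    using int_f0[OF lam] by (simp add: G_def f0_def)
  finally have "(\<integral>\<^sup>+h. fU lam 0 h \<partial>lborel) \<le> ennreal (2 * lam) * 2 + ennreal (sqrt lam)" .
  moreover have "ennreal (2 * lam) * 2 + ennreal (sqrt lam) < \<infinity>"
    by (simp add: ennreal_mult_less_top)
  ultimately show ?thesis by (rule le_less_trans)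
qed

lemma IU_lim: assumes lam: "0 < lam"
  shows "(\<lambda>n. \<integral>\<^sup>+h. fU lam n h \<partial>lborel) \<longlonglongrightarrow> ennreal (sqrt lam)"
proof -
  have dec: "decseq (\<lambda>n. fU lam n)" by (intro decseq_SucI le_funI fU_mono[OF lam]) simp
  have fin: "(\<integral>\<^sup>+h. fU lam n h \<partial>lborel) < \<infinity>" for n
    using fU0_fin[OF lam] nn_integral_mono[of lborel "fU lam n" "fU lam 0"] fU_mono[OF lam, of 0 n]
    by (meson le_less_trans le0)
  have inf: "(INF n. fU lam n h) = f0 lam h" for h
  proof -
    have "decseq (\<lambda>n. fU lam n h)" by (intro decseq_SucI fU_mono[OF lam]) simp
    thus ?thesis using LIMSEQ_unique[OF LIMSEQ_INF fU_lim[OF lam]] by auto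
  qed
  have "(\<integral>\<^sup>+ h. (INF n. fU lam n h) \<partial>lborel) = (INF n. \<integral>\<^sup>+h. fU lam n h \<partial>lborel)"
    by (rule nn_integral_monotone_convergence_INF_decseq[OF dec _ fin]) simp
  hence e: "(INF n. \<integral>\<^sup>+h. fU lam n h \<partial>lborel) = ennreal (sqrt lam)" using inf int_f0[OF lam] by simp
  have "decseq (\<lambda>n. \<integral>\<^sup>+h. fU lam n h \<partial>lborel)"
    by (intro decseq_SucI nn_integral_mono fU_mono[OF lam]) simp
  from LIMSEQ_INF[OF this] show ?thesis unfolding e .
qed

lemma IL_sup: assumes lam: "0 < lam"
  shows "(SUP n. \<integral>\<^sup>+h. fL lam n h \<partial>lborel) = ennreal (sqrt lam)"
proof -
  have inc: "incseq (\<lambda>n. fL lam n)" by (intro incseq_SucI le_funI fL_mono[OF lam]) simp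
  have sup: "(SUP n. fL lam n h) = f0 lam h" for h
  proof -
    have "incseq (\<lambda>n. fL lam n h)" by (intro incseq_SucI fL_mono[OF lam]) simp
    thus ?thesis using LIMSEQ_unique[OF LIMSEQ_SUP fL_lim[OF lam]] by auto
  qed
  have "(\<integral>\<^sup>+ h. (SUP n. fL lam n h) \<partial>lborel) = (SUP n. \<integral>\<^sup>+h. fL lam n h \<partial>lborel)"
    by (rule nn_integral_monotone_convergence_SUP[OF inc]) auto
  thus ?thesis using sup int_f0[OF lam] by simp
qed



lemma hdisk_cell_disj: assumes d0: "0 \<le> d" shows
  "hdisk (ca d Q) (cb d Q - d) \<inter> (cell d Q \<inter> X) = {}"
proof -
  { fix y assume y: "y \<in> hdisk (ca d Q) (cb d Q - d)" "y \<in> cell d Q"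
    have c: "cb d Q \<le> snd y" using in_cell[OF y(2)] by simp
    have h: "0 < snd y" "(fst y - ca d Q)\<^sup>2 + (snd y)\<^sup>2 < (cb d Q - d)\<^sup>2" "0 < cb d Q - d"
      using y(1) by (auto simp: hdisk_def)
    have "(snd y)\<^sup>2 < (cb d Q - d)\<^sup>2" using h(2) zero_le_power2[of "fst y - ca d Q"] by linarith
    hence "snd y < cb d Q - d" by (rule power_less_imp_less_base) (use h in auto)
    hence False using c h(3) d0 by simp }
  thus ?thesis by auto
qed

lemma cb_cidx: assumes d: "0 < d" shows "cb d (cidx d y) \<le> snd y" "snd y < cb d (cidx d y) + d"
proof -
  have "y \<in> cell d (cidx d y)" using mem_cell[OF d] by simp
  from in_cell[OF this] show "cb d (cidx d y) \<le> snd y" "snd y < cb d (cidx d y) + d" by auto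
qed

context hp
begin

lemma measure_hdisk: "measure mu (hdisk c r) = pi * lam * (max 0 r)\<^sup>2"
  using hi_hdisk[of lam c r] lam_pos by (simp add: measure_def)

lemma fin_cell: "0 < d \<Longrightarrow> emeasure mu (cell d Q) < \<infinity>"
  using hi_cell[of d lam Q] lam_pos by (simp add: le_less_trans)

lemma fin_hdisk: "emeasure mu (hdisk c r) < \<infinity>"
  using hi_hdisk[of lam c r] lam_pos by simp

lemma fin_sub_cell: "0 < d \<Longrightarrow> X \<in> sets borel \<Longrightarrow> emeasure mu (cell d Q \<inter> X) < \<infinity>"
  using fin_cell[of d Q] emeasure_mono[of "cell d Q \<inter> X" "cell d Q" mu]
  by (simp add: le_less_trans)

lemma EU_sets:
  assumes B[measurable]: "B \<in> sets borel"
  shows "{\<omega>\<in>space M. Q \<in> SU (H \<omega>) B d} \<in> sets M" "{\<omega>\<in>space M. Q \<in> SL (H \<omega>) B d} \<in> sets M"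
  unfolding SU_def SL_def by measurable

lemma probU:
  assumes B[measurable]: "B \<in> sets borel" and d: "0 < d"
  shows "emeasure M {\<omega>\<in>space M. Q \<in> SU (H \<omega>) B d} \<le>
     emeasure mu (cell d Q \<inter> AB B) * ennreal (exp (- pi * lam * (max 0 (cb d Q - d))\<^sup>2))"
proof -
  define X where "X = cell d Q \<inter> AB B"
  define Y where "Y = hdisk (ca d Q) (cb d Q - d)"
  have X[measurable]: "X \<in> sets borel" and Y[measurable]: "Y \<in> sets borel" by (auto simp: X_def Y_def)
  have XY: "X \<inter> Y = {}" using hdisk_cell_disj[of d Q "AB B"] d by (auto simp: X_def Y_def)
  have fX: "emeasure mu X < \<infinity>" unfolding X_def by (rule fin_sub_cell[OF d]) simp
  have fY: "emeasure mu Y < \<infinity>" unfolding Y_def by (rule fin_hdisk)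
  have eq: "{\<omega>\<in>space M. Q \<in> SU (H \<omega>) B d} = {\<omega>\<in>space M. pcount (H \<omega>) X = 1 \<and> pcount (H \<omega>) Y = 0}"
    by (auto simp: SU_def X_def Y_def)
  have "emeasure M {\<omega>\<in>space M. Q \<in> SU (H \<omega>) B d} = ennreal ((measure mu X * exp (- measure mu X)) * exp (- measure mu Y))"
    unfolding eq emeasure_eq_measure by (simp add: prob_10[OF X Y XY fX fY])
  also have "\<dots> \<le> ennreal (measure mu X * exp (- measure mu Y))"
  proof (intro ennreal_leI)
    have "exp (- measure mu X) \<le> 1" by simp
    hence "measure mu X * exp (- measure mu X) \<le> measure mu X" by (intro mult_left_le) auto
    thus "measure mu X * exp (- measure mu X) * exp (- measure mu Y) \<le> measure mu X * exp (- measure mu Y)"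
      by (intro mult_right_mono) auto
  qed
  also have "\<dots> = emeasure mu X * ennreal (exp (- measure mu Y))"
    using fX by (simp add: ennreal_mult emeasure_eq_ennreal_measure)
  also have "measure mu Y = pi * lam * (max 0 (cb d Q - d))\<^sup>2" unfolding Y_def by (rule measure_hdisk)
  finally show ?thesis by (simp add: X_def)
qed

lemma probL:
  assumes B[measurable]: "B \<in> sets borel" and d: "0 < d"
  shows "emeasure mu (cell d Q \<inter> AB B) * ennreal (exp (- (pi * lam * (max 0 (cb d Q + 2 * d))\<^sup>2 + 2 * lam * d\<^sup>2)))
     \<le> emeasure M {\<omega>\<in>space M. Q \<in> SL (H \<omega>) B d}"
proof -
  define X where "X = cell d Q \<inter> AB B"
  define U where "U = hdisk (ca d Q) (cb d Q + 2 * d)"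
  define W where "W = (U \<union> cell d Q) - X"
  have X[measurable]: "X \<in> sets borel" and U[measurable]: "U \<in> sets borel" and W[measurable]: "W \<in> sets borel"
    by (auto simp: X_def U_def W_def)
  have XW: "X \<inter> W = {}" by (auto simp: W_def)
  have fX: "emeasure mu X < \<infinity>" unfolding X_def by (rule fin_sub_cell[OF d]) simp
  have fU: "emeasure mu U < \<infinity>" unfolding U_def by (rule fin_hdisk)
  have fc: "emeasure mu (cell d Q) < \<infinity>" by (rule fin_cell[OF d])
  have fUc: "emeasure mu (U \<union> cell d Q) < \<infinity>"
  proof (rule le_less_trans)
    show "emeasure mu (U \<union> cell d Q) \<le> emeasure mu U + emeasure mu (cell d Q)"
      by (rule emeasure_subadditive) auto
    show "emeasure mu U + emeasure mu (cell d Q) < \<infinity>" using fU fc by simp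
  qed
  have fW: "emeasure mu W < \<infinity>"
    using emeasure_mono[of W "U \<union> cell d Q" mu] fUc by (auto simp: W_def intro: le_less_trans)
  have XWu: "X \<union> W = U \<union> cell d Q" by (auto simp: W_def X_def)
  have "measure mu X + measure mu W = measure mu (U \<union> cell d Q)"
    using measure_Union[of mu X W] fX fW XW XWu by simp
  also have "\<dots> \<le> measure mu U + measure mu (cell d Q)" by (rule measure_Un_le) auto
  also have "measure mu U = pi * lam * (max 0 (cb d Q + 2 * d))\<^sup>2" unfolding U_def by (rule measure_hdisk)
  also have "measure mu (cell d Q) \<le> 2 * lam * d\<^sup>2"
    using hi_cell[of d lam Q] d lam_pos fc by (simp add: measure_def enn2real_leI)
  finally have sum: "measure mu X + measure mu W \<le> pi * lam * (max 0 (cb d Q + 2 * d))\<^sup>2 + 2 * lam * d\<^sup>2" by simp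
  have eq: "{\<omega>\<in>space M. Q \<in> SL (H \<omega>) B d} = {\<omega>\<in>space M. pcount (H \<omega>) X = 1 \<and> pcount (H \<omega>) W = 0}"
    by (auto simp: SL_def X_def U_def W_def)
  have "emeasure mu X * ennreal (exp (- (pi * lam * (max 0 (cb d Q + 2 * d))\<^sup>2 + 2 * lam * d\<^sup>2)))
      = ennreal (measure mu X * exp (- (pi * lam * (max 0 (cb d Q + 2 * d))\<^sup>2 + 2 * lam * d\<^sup>2)))"
    using fX by (simp add: ennreal_mult emeasure_eq_ennreal_measure)
  also have "\<dots> \<le> ennreal ((measure mu X * exp (- measure mu X)) * exp (- measure mu W))"
  proof (intro ennreal_leI)
    have "exp (- (pi * lam * (max 0 (cb d Q + 2 * d))\<^sup>2 + 2 * lam * d\<^sup>2)) \<le> exp (- measure mu X) * exp (- measure mu W)"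
      using sum by (simp add: exp_add[symmetric])
    thus "measure mu X * exp (- (pi * lam * (max 0 (cb d Q + 2 * d))\<^sup>2 + 2 * lam * d\<^sup>2)) \<le> measure mu X * exp (- measure mu X) * exp (- measure mu W)"
      by (simp add: mult.assoc mult_left_mono)
  qed
  also have "\<dots> = emeasure M {\<omega>\<in>space M. Q \<in> SL (H \<omega>) B d}"
    unfolding eq emeasure_eq_measure by (simp add: prob_10[OF X W XW fX fW])
  finally show ?thesis by (simp add: X_def)
qed

end



context hp
begin

definition SUf :: "real set \<Rightarrow> nat \<Rightarrow> 'w \<Rightarrow> ennreal" where
  "SUf B n \<omega> = (\<integral>\<^sup>+Q. indicator {\<omega>\<in>space M. Q \<in> SU (H \<omega>) B (dn n)} \<omega> \<partial>count_space UNIV)"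

definition SLf :: "real set \<Rightarrow> nat \<Rightarrow> 'w \<Rightarrow> ennreal" where
  "SLf B n \<omega> = (\<integral>\<^sup>+Q. indicator {\<omega>\<in>space M. Q \<in> SL (H \<omega>) B (dn n)} \<omega> \<partial>count_space UNIV)"

lemma SUf_eq: "\<omega> \<in> space M \<Longrightarrow> SUf B n \<omega> = ecard (SU (H \<omega>) B (dn n))"
proof -
  assume w: "\<omega> \<in> space M"
  have "SUf B n \<omega> = (\<integral>\<^sup>+Q. indicator (SU (H \<omega>) B (dn n)) Q \<partial>count_space UNIV)"
    unfolding SUf_def using w by (intro nn_integral_cong) (auto simp: indicator_def)
  thus ?thesis by simp
qed

lemma SLf_eq: "\<omega> \<in> space M \<Longrightarrow> SLf B n \<omega> = ecard (SL (H \<omega>) B (dn n))"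
proof -
  assume w: "\<omega> \<in> space M"
  have "SLf B n \<omega> = (\<integral>\<^sup>+Q. indicator (SL (H \<omega>) B (dn n)) Q \<partial>count_space UNIV)"
    unfolding SLf_def using w by (intro nn_integral_cong) (auto simp: indicator_def)
  thus ?thesis by simp
qed

lemma SUf_meas: "B \<in> sets borel \<Longrightarrow> SUf B n \<in> borel_measurable M"
  unfolding SUf_def[abs_def] by (intro measurable_countsum borel_measurable_indicator EU_sets)

lemma SLf_meas: "B \<in> sets borel \<Longrightarrow> SLf B n \<in> borel_measurable M"
  unfolding SLf_def[abs_def] by (intro measurable_countsum borel_measurable_indicator EU_sets)

lemma intU:
  assumes B[measurable]: "B \<in> sets borel"
  shows "(\<integral>\<^sup>+\<omega>. SUf B n \<omega> \<partial>M) \<le> emeasure lborel B * (\<integral>\<^sup>+h. fU lam n h \<partial>lborel)"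
proof -
  define d where "d = dn n"
  have d: "0 < d" by (simp add: d_def dn_pos)
  define c where "c = (\<lambda>Q. exp (- pi * lam * (max 0 (cb d Q - d))\<^sup>2))"
  have "(\<integral>\<^sup>+\<omega>. SUf B n \<omega> \<partial>M) = (\<integral>\<^sup>+Q. \<integral>\<^sup>+\<omega>. indicator {\<omega>\<in>space M. Q \<in> SU (H \<omega>) B d} \<omega> \<partial>M \<partial>count_space UNIV)"
    unfolding SUf_def d_def
    by (rule nn_integral_count_space_nn_integral) (auto intro!: borel_measurable_indicator EU_sets[OF B])
  also have "\<dots> = (\<integral>\<^sup>+Q. emeasure M {\<omega>\<in>space M. Q \<in> SU (H \<omega>) B d} \<partial>count_space UNIV)"
    by (intro nn_integral_cong nn_integral_indicator EU_sets[OF B])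
  also have "\<dots> \<le> (\<integral>\<^sup>+Q. emeasure mu (cell d Q \<inter> AB B) * ennreal (c Q) \<partial>count_space UNIV)"
    unfolding c_def by (intro nn_integral_mono probU[OF B d])
  also have "\<dots> = (\<integral>\<^sup>+y. indicator (AB B) y * ennreal (c (cidx d y)) \<partial>mu)"
    by (rule cellsum[OF d]) simp
  also have "\<dots> \<le> (\<integral>\<^sup>+y. indicator (AB B) y * ennreal (exp (- pi * lam * (max 0 (snd y - 2 * d))\<^sup>2)) \<partial>mu)"
  proof (intro nn_integral_mono)
    fix y :: "real \<times> real"
    have "snd y < cb d (cidx d y) + d" by (rule cb_cidx[OF d])
    hence "max 0 (snd y - 2 * d) \<le> max 0 (cb d (cidx d y) - d)" by simp
    hence "(max 0 (snd y - 2 * d))\<^sup>2 \<le> (max 0 (cb d (cidx d y) - d))\<^sup>2" by (intro power_mono) auto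
    hence "c (cidx d y) \<le> exp (- pi * lam * (max 0 (snd y - 2 * d))\<^sup>2)"
      unfolding c_def using lam_pos by (simp add: mult_left_mono)
    thus "indicator (AB B) y * ennreal (c (cidx d y)) \<le> indicator (AB B) y * ennreal (exp (- pi * lam * (max 0 (snd y - 2 * d))\<^sup>2))"
      by (intro mult_left_mono ennreal_leI) auto
  qed
  also have "\<dots> = emeasure lborel B * (\<integral>\<^sup>+h. indicator {0<..} h * ennreal (2 * lam * exp (- pi * lam * (max 0 (h - 2 * d))\<^sup>2)) \<partial>lborel)"
    by (rule Klem[where g="\<lambda>h. exp (- pi * lam * (max 0 (h - 2 * d))\<^sup>2)"]) (use lam_pos in auto)
  also have "\<dots> = emeasure lborel B * (\<integral>\<^sup>+h. fU lam n h \<partial>lborel)"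
    by (simp add: fU_def d_def)
  finally show ?thesis .
qed

lemma intL:
  assumes B[measurable]: "B \<in> sets borel"
  shows "emeasure lborel B * (\<integral>\<^sup>+h. fL lam n h \<partial>lborel) \<le> (\<integral>\<^sup>+\<omega>. SLf B n \<omega> \<partial>M)"
proof -
  define d where "d = dn n"
  have d: "0 < d" by (simp add: d_def dn_pos)
  define c where "c = (\<lambda>Q. exp (- (pi * lam * (max 0 (cb d Q + 2 * d))\<^sup>2 + 2 * lam * d\<^sup>2)))"
  have "emeasure lborel B * (\<integral>\<^sup>+h. fL lam n h \<partial>lborel) =
     emeasure lborel B * (\<integral>\<^sup>+h. indicator {0<..} h * ennreal (2 * lam * exp (- (pi * lam * (h + 2 * d)\<^sup>2 + 2 * lam * d\<^sup>2))) \<partial>lborel)"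
    by (simp add: fL_def d_def)
  also have "\<dots> = (\<integral>\<^sup>+y. indicator (AB B) y * ennreal (exp (- (pi * lam * (snd y + 2 * d)\<^sup>2 + 2 * lam * d\<^sup>2))) \<partial>mu)"
    by (rule Klem[where g="\<lambda>h. exp (- (pi * lam * (h + 2 * d)\<^sup>2 + 2 * lam * d\<^sup>2))", symmetric]) (use lam_pos in auto)
  also have "\<dots> \<le> (\<integral>\<^sup>+y. indicator (AB B) y * ennreal (c (cidx d y)) \<partial>mu)"
  proof (intro nn_integral_mono)
    fix y :: "real \<times> real"
    show "indicator (AB B) y * ennreal (exp (- (pi * lam * (snd y + 2 * d)\<^sup>2 + 2 * lam * d\<^sup>2))) \<le> indicator (AB B) y * ennreal (c (cidx d y))"
    proof (cases "y \<in> AB B")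
      case True
      hence hy: "0 < snd y" by (simp add: AB_def)
      have "cb d (cidx d y) \<le> snd y" by (rule cb_cidx[OF d])
      hence "max 0 (cb d (cidx d y) + 2 * d) \<le> snd y + 2 * d" using hy d by simp
      hence "(max 0 (cb d (cidx d y) + 2 * d))\<^sup>2 \<le> (snd y + 2 * d)\<^sup>2" by (intro power_mono) auto
      hence "exp (- (pi * lam * (snd y + 2 * d)\<^sup>2 + 2 * lam * d\<^sup>2)) \<le> c (cidx d y)"
        unfolding c_def using lam_pos by (simp add: mult_left_mono)
      thus ?thesis by (intro mult_left_mono ennreal_leI) auto
    qed simp
  qed
  also have "\<dots> = (\<integral>\<^sup>+Q. emeasure mu (cell d Q \<inter> AB B) * ennreal (c Q) \<partial>count_space UNIV)"
    by (rule cellsum[OF d, symmetric]) simp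
  also have "\<dots> \<le> (\<integral>\<^sup>+Q. emeasure M {\<omega>\<in>space M. Q \<in> SL (H \<omega>) B d} \<partial>count_space UNIV)"
    unfolding c_def by (intro nn_integral_mono probL[OF B d])
  also have "\<dots> = (\<integral>\<^sup>+Q. \<integral>\<^sup>+\<omega>. indicator {\<omega>\<in>space M. Q \<in> SL (H \<omega>) B d} \<omega> \<partial>M \<partial>count_space UNIV)"
    by (intro nn_integral_cong nn_integral_indicator[symmetric] EU_sets[OF B])
  also have "\<dots> = (\<integral>\<^sup>+\<omega>. SLf B n \<omega> \<partial>M)"
    unfolding SLf_def d_def
    by (rule nn_integral_count_space_nn_integral[symmetric]) (auto intro!: borel_measurable_indicator EU_sets[OF B])
  finally show ?thesis .
qed

end



context hp
begin

lemma AE_pos: "AE \<omega> in M. \<forall>q\<in>H \<omega>. 0 < snd q"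
  using AE_neg
proof eventually_elim
  fix \<omega> assume "pcount (H \<omega>) {y. snd y \<le> 0} = 0"
  hence e: "H \<omega> \<inter> {y. snd y \<le> 0} = {}" by (simp add: pcount_zero_iff)
  show "\<forall>q\<in>H \<omega>. 0 < snd q"
  proof
    fix q assume "q \<in> H \<omega>"
    hence "\<not> snd q \<le> 0" using e by blast
    thus "0 < snd q" by simp
  qed
qed

lemma AE_locfin: "AE \<omega> in M. \<forall>p\<in>H \<omega>. finite (H \<omega> \<inter> cball p 1)"
proof -
  have "AE \<omega> in M. \<forall>k. pcount (H \<omega>) (sbox k) \<noteq> \<infinity>"
  proof (subst AE_all_countable, intro allI)
    fix k
    show "AE \<omega> in M. pcount (H \<omega>) (sbox k) \<noteq> \<infinity>"
      using AE_fin[OF sbox_borel, of k] hi_sbox[of lam k] lam_pos by simp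
  qed
  thus ?thesis
  proof eventually_elim
    fix \<omega> assume all: "\<forall>k. pcount (H \<omega>) (sbox k) \<noteq> \<infinity>"
    show "\<forall>p\<in>H \<omega>. finite (H \<omega> \<inter> cball p 1)"
    proof
      fix p assume "p \<in> H \<omega>"
      define k where "k = nat \<lceil>\<bar>fst p\<bar> + \<bar>snd p\<bar>\<rceil> + 1"
      have kb: "\<bar>fst p\<bar> + \<bar>snd p\<bar> + 1 \<le> real k" unfolding k_def by linarith
      have fin: "finite (H \<omega> \<inter> sbox k)" using all[rule_format, of k] by (auto simp: pcount_def split: if_splits)
      have "cball p 1 \<subseteq> sbox k"
      proof
        fix y assume "y \<in> cball p 1"
        hence dy: "dist p y \<le> 1" by (simp add: mem_cball)
        have "dist (fst p) (fst y) \<le> 1" "dist (snd p) (snd y) \<le> 1"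
          using dist_fst_le[of p y] dist_snd_le[of p y] dy by auto
        hence "\<bar>fst y\<bar> \<le> real k" "\<bar>snd y\<bar> \<le> real k" using kb by (auto simp: dist_real_def)
        thus "y \<in> sbox k" by (cases y) (auto simp: sbox_def)
      qed
      hence "H \<omega> \<inter> cball p 1 \<subseteq> H \<omega> \<inter> sbox k" by blast
      thus "finite (H \<omega> \<inter> cball p 1)" using fin by (rule finite_subset)
    qed
  qed
qed

lemma upper_liminf:
  assumes pos: "\<forall>q\<in>H \<omega>. 0 < snd q" and fin: "\<forall>p\<in>H \<omega>. finite (H \<omega> \<inter> cball p 1)" and w: "\<omega> \<in> space M"
  shows "ecard (Env (H \<omega>) B) \<le> liminf (\<lambda>n. SUf B n \<omega>)"
proof -
  have key: "of_nat (card F) \<le> liminf (\<lambda>n. SUf B n \<omega>)" if F: "finite F" "F \<subseteq> Env (H \<omega>) B" for F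
  proof -
    obtain e where e: "0 < e" "\<forall>d. 0 < d \<and> d < e \<longrightarrow> of_nat (card F) \<le> ecard (SU (H \<omega>) B d)"
      using upper_path[OF pos fin F] by blast
    obtain N where N: "\<forall>n\<ge>N. dn n < e" using dn_small[OF e(1)] by blast
    show ?thesis
    proof (rule Liminf_bounded, rule eventually_sequentiallyI)
      fix n assume "N \<le> n"
      thus "of_nat (card F) \<le> SUf B n \<omega>" using e N dn_pos[of n] SUf_eq[OF w] by simp
    qed
  qed
  show ?thesis
  proof (cases "finite (Env (H \<omega>) B)")
    case True
    thus ?thesis using key[OF True order.refl] by (simp add: ecard_def')
  next
    case False
    have "\<forall>k. of_nat k \<le> liminf (\<lambda>n. SUf B n \<omega>)"
    proof
      fix k
      obtain F where "F \<subseteq> Env (H \<omega>) B" "finite F" "card F = k"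
        using infinite_arbitrarily_large[OF False] by blast
      thus "of_nat k \<le> liminf (\<lambda>n. SUf B n \<omega>)" using key by blast
    qed
    hence "liminf (\<lambda>n. SUf B n \<omega>) = \<top>"
      using ennreal_Ex_less_of_nat top.not_eq_extremum leD by metis
    thus ?thesis by simp
  qed
qed

theorem main:
  assumes B[measurable]: "B \<in> sets borel"
  shows "(\<integral>\<^sup>+\<omega>. pcount (AV (H \<omega>)) B \<partial>M) = ennreal (sqrt lam) * emeasure lborel B"
proof (rule antisym)
  have AEN: "AE \<omega> in M. pcount (AV (H \<omega>)) B = ecard (Env (H \<omega>) B)"
    using AE_pos by eventually_elim (rule pcount_AV)
  have "AE \<omega> in M. pcount (AV (H \<omega>)) B \<le> liminf (\<lambda>n. SUf B n \<omega>)"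
    using AEN AE_pos AE_locfin AE_space by eventually_elim (simp add: upper_liminf)
  hence "(\<integral>\<^sup>+\<omega>. pcount (AV (H \<omega>)) B \<partial>M) \<le> (\<integral>\<^sup>+\<omega>. liminf (\<lambda>n. SUf B n \<omega>) \<partial>M)"
    by (rule nn_integral_mono_AE)
  also have "\<dots> \<le> liminf (\<lambda>n. \<integral>\<^sup>+\<omega>. SUf B n \<omega> \<partial>M)"
    by (rule nn_integral_liminf) (rule SUf_meas[OF B])
  also have "\<dots> \<le> liminf (\<lambda>n. emeasure lborel B * (\<integral>\<^sup>+h. fU lam n h \<partial>lborel))"
    by (intro Liminf_mono always_eventually allI intU[OF B])
  also have "\<dots> \<le> ennreal (sqrt lam) * emeasure lborel B"
  proof (cases "emeasure lborel B = \<top>")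
    case True
    thus ?thesis using lam_pos by (simp add: ennreal_mult_top)
  next
    case False
    have "(\<lambda>n. emeasure lborel B * (\<integral>\<^sup>+h. fU lam n h \<partial>lborel)) \<longlonglongrightarrow> emeasure lborel B * ennreal (sqrt lam)"
      by (rule ennreal_tendsto_cmult) (use False IU_lim[OF lam_pos] in \<open>auto simp: top.not_eq_extremum\<close>)
    hence "liminf (\<lambda>n. emeasure lborel B * (\<integral>\<^sup>+h. fU lam n h \<partial>lborel)) = emeasure lborel B * ennreal (sqrt lam)"
      by (intro lim_imp_Liminf) auto
    thus ?thesis by (simp add: mult.commute)
  qed
  finally show "(\<integral>\<^sup>+\<omega>. pcount (AV (H \<omega>)) B \<partial>M) \<le> ennreal (sqrt lam) * emeasure lborel B" .
next
  have AEN: "AE \<omega> in M. pcount (AV (H \<omega>)) B = ecard (Env (H \<omega>) B)"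
    using AE_pos by eventually_elim (rule pcount_AV)
  have "emeasure lborel B * (\<integral>\<^sup>+h. fL lam n h \<partial>lborel) \<le> (\<integral>\<^sup>+\<omega>. pcount (AV (H \<omega>)) B \<partial>M)" for n
  proof -
    have a: "emeasure lborel B * (\<integral>\<^sup>+h. fL lam n h \<partial>lborel) \<le> (\<integral>\<^sup>+\<omega>. SLf B n \<omega> \<partial>M)" by (rule intL[OF B])
    have "AE \<omega> in M. SLf B n \<omega> \<le> pcount (AV (H \<omega>)) B"
      using AEN AE_pos AE_space by eventually_elim (simp add: SLf_eq lower_path dn_pos)
    hence "(\<integral>\<^sup>+\<omega>. SLf B n \<omega> \<partial>M) \<le> (\<integral>\<^sup>+\<omega>. pcount (AV (H \<omega>)) B \<partial>M)"
      by (rule nn_integral_mono_AE)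
    with a show ?thesis by (rule order_trans)
  qed
  hence "(SUP n. emeasure lborel B * (\<integral>\<^sup>+h. fL lam n h \<partial>lborel)) \<le> (\<integral>\<^sup>+\<omega>. pcount (AV (H \<omega>)) B \<partial>M)"
    by (rule SUP_least)
  moreover have "(SUP n. emeasure lborel B * (\<integral>\<^sup>+h. fL lam n h \<partial>lborel)) = ennreal (sqrt lam) * emeasure lborel B"
    using IL_sup[OF lam_pos] by (simp add: SUP_mult_left_ennreal[symmetric] mult.commute)
  ultimately show "ennreal (sqrt lam) * emeasure lborel B \<le> (\<integral>\<^sup>+\<omega>. pcount (AV (H \<omega>)) B \<partial>M)" by simp
qed

end

theorem lemma5p8:
  fixes M :: "'w measure" and Heads :: "'w \<Rightarrow> (real \<times> real) set" and lam :: real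
  assumes "0 < lam"
    and "poisson_pp M Heads (head_intensity lam)"
    and "B \<in> sets (lborel :: real measure)"
  shows "(\<integral>\<^sup>+ \<omega>. pcount (AV (Heads \<omega>)) B \<partial>M) = ennreal (sqrt lam) * emeasure lborel B"
proof -
  interpret hp M Heads lam by unfold_locales (use assms in auto)
  show ?thesis using assms(3) by (intro main) simp
qed


end
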